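(* Assume all jobs are infinitesimal. Let $\mathcal B_{IPR}=\{B_1,\dots,B_m\}$ be the partition returned by IPR with $\rho=2$. Then $b_{\max}\le\frac{W}{\ell}$, where, for the final tentative assignment, $b_{\max}=\max_{B\in\mathcal B_{IPR},|B|\ge2}p(B)$, $\mathcal M_{\max}$ is the collection containing a bag of processing time $b_{\max}$, $W=\sum_{B\in\mathcal M_{\max}}p(B)$ and $\ell=|\mathcal M_{\max}|$.
   Context: Jobs have processing times; for a bag $B$, $p(B)$ is its total processing time. Infinitesimal jobs: all jobs have the same extremely small processing time, so that the total load can be divided into bags of arbitrary total processing times; in particular the LPT redistribution below splits a pooled load perfectly evenly among the new bags. There are $m$ machines with predicted speeds $\hat s_1\ge\dots\ge\hat s_m$; $opt(\mathbf p,\hat{\mathbf s})$ is the minimum makespan $\max_i(\text{load of } i)/\hat s_i$ of assigning jobs to machines with speeds $\hat{\mathbf s}$. Algorithm IPR. Input: $\hat{\mathbf s}$, the jobs, $\alpha\in(0,1)$, accuracy $\epsilon\in(0,1)$, $\rho\ge1$. (1) Compute a partition $B_1,\dots,B_m$ with $p(B_1)\ge\dots\ge p(B_m)$ such that putting $B_i$ on machine $i$ has makespan at most $(1+\epsilon)opt(\mathbf p,\hat{\mathbf s})$ under speeds $\hat{\mathbf s}$. (2) Set $\overline{OPT}_C=\max_i p(B_i)/\hat s_i$ and tentative assignment $\mathcal M_i=\{B_i\}$. (3) While $\max\{p(B): B\in\cup_i\mathcal M_i, |B|\ge2\}>\rho\min\{p(B):B\in\cup_i\mathcal M_i\}$: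 compute $\mathcal M'=$ LPT-Rebalance$(\mathcal M)$; if $\max_i\sum_{B\in\mathcal M'_i}p(B)/\hat s_i>(1+\alpha)\overline{OPT}_C$ return the current bags $\cup_i\mathcal M_i$; else $\mathcal M\leftarrow\mathcal M'$. (4) Return the bags $\cup_i\mathcal M_i$. LPT-Rebalance: let $B_{\min}$ be a bag of minimum $p(B)$ over all bags, $\mathcal M_{\min}$ its collection, $\mathcal M_{\max}$ a collection containing a bag of maximum $p(B)$ among bags with at least two jobs. Move $B_{\min}$ into $\mathcal M_{\max}$, let $\ell=|\mathcal M_{\max}|$, pool its jobs and redistribute them into $\ell$ new bags by LPT (jobs in non-increasing processing time, each into a currently least-loaded bag); these form the new $\mathcal M_{\max}$. *)

theory Defs
  imports Complex_Main "HOL-Library.Multiset"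
begin

(* Infinitesimal-jobs model: a bag is represented by its total processing
   time p(B) (a nonnegative real); a tentative assignment M maps each machine
   index i < m (machines indexed 0..m-1) to the multiset of (loads of) bags
   in its collection M_i.  A bag of infinitesimal jobs has at least two jobs
   iff its total processing time is positive. *)

type_synonym tassign = "nat \<Rightarrow> real multiset"

definition opt_inf :: "nat \<Rightarrow> (nat \<Rightarrow> real) \<Rightarrow> real \<Rightarrow> real" where
  "opt_inf m s P = Inf {Max ((\<lambda>i. x i / s i) ` {..<m}) | x.
      (\<forall>i<m. 0 \<le> x i) \<and> (\<Sum>i<m. x i) = P}"

definition all_bags :: "nat \<Rightarrow> tassign \<Rightarrow> real multiset" where
  "all_bags m M = (\<Sum>i<m. M i)"

definition big_bags :: "nat \<Rightarrow> tassign \<Rightarrow> real multiset" where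
  "big_bags m M = filter_mset (\<lambda>b. 0 < b) (all_bags m M)"

definition makespan :: "nat \<Rightarrow> (nat \<Rightarrow> real) \<Rightarrow> tassign \<Rightarrow> real" where
  "makespan m s M = Max ((\<lambda>i. sum_mset (M i) / s i) ` {..<m})"

definition loop_cond :: "nat \<Rightarrow> real \<Rightarrow> tassign \<Rightarrow> bool" where
  "loop_cond m \<rho> M \<longleftrightarrow> big_bags m M \<noteq> {#} \<and>
     Max (set_mset (big_bags m M)) > \<rho> * Min (set_mset (all_bags m M))"

(* M' is a possible result of LPT-Rebalance(M) (any tie-breaking) *)
definition lpt_rebalance :: "nat \<Rightarrow> tassign \<Rightarrow> tassign \<Rightarrow> bool" where
  "lpt_rebalance m M M' \<longleftrightarrow>
     (\<exists>imin imax bmin bmax. imin < m \<and> imax < m \<and>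
        bmin \<in># M imin \<and> bmin = Min (set_mset (all_bags m M)) \<and>
        bmax \<in># M imax \<and> 0 < bmax \<and> bmax = Max (set_mset (big_bags m M)) \<and>
        (let M1 = M(imin := M imin - {#bmin#});
             M2 = M1(imax := M1 imax + {#bmin#});
             l = size (M2 imax); W = sum_mset (M2 imax)
         in M' = M2(imax := replicate_mset l (W / real l))))"

(* M is the final tentative assignment of some run of IPR on speeds s,
   total (infinitesimal) job load P, with parameters alpha, eps, rho. *)
definition ipr_final ::
  "nat \<Rightarrow> (nat \<Rightarrow> real) \<Rightarrow> real \<Rightarrow> real \<Rightarrow> real \<Rightarrow> real \<Rightarrow> tassign \<Rightarrow> bool" where
  "ipr_final m s P \<alpha> \<epsilon> \<rho> M \<longleftrightarrow>
     (\<exists>B :: nat \<Rightarrow> real. \<exists>Ms :: nat \<Rightarrow> tassign. \<exists>k :: nat.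
        (\<forall>i<m. 0 \<le> B i) \<and> (\<Sum>i<m. B i) = P \<and>
        (\<forall>i j. i \<le> j \<longrightarrow> j < m \<longrightarrow> B j \<le> B i) \<and>
        Max ((\<lambda>i. B i / s i) ` {..<m}) \<le> (1 + \<epsilon>) * opt_inf m s P \<and>
        (let OPTC = Max ((\<lambda>i. B i / s i) ` {..<m}) in
          Ms 0 = (\<lambda>i. {#B i#}) \<and>
          (\<forall>j<k. loop_cond m \<rho> (Ms j) \<and> lpt_rebalance m (Ms j) (Ms (Suc j)) \<and>
                  makespan m s (Ms (Suc j)) \<le> (1 + \<alpha>) * OPTC) \<and>
          (\<not> loop_cond m \<rho> (Ms k) \<or>
           (\<exists>M'. lpt_rebalance m (Ms k) M' \<and> makespan m s M' > (1 + \<alpha>) * OPTC)) \<and>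
          M = Ms k))"

end

theory Submission
  imports Defs
begin

definition unif :: "tassign \<Rightarrow> bool" where
  "unif M \<longleftrightarrow> (\<forall>i x y. x \<in># M i \<longrightarrow> y \<in># M i \<longrightarrow> x = y)"

lemma unif_step:
  assumes "unif M" "lpt_rebalance m M M'"
  shows "unif M'"
proof -
  obtain imin imax bmin where
    M': "M' = (M(imin := M imin - {#bmin#}, imax := (M(imin := M imin - {#bmin#})) imax + {#bmin#}))(imax := replicate_mset (size ((M(imin := M imin - {#bmin#})) imax + {#bmin#})) (sum_mset ((M(imin := M imin - {#bmin#})) imax + {#bmin#}) / real (size ((M(imin := M imin - {#bmin#})) imax + {#bmin#}))))"
    using assms(2) unfolding lpt_rebalance_def Let_def by auto
  show ?thesis
    unfolding unif_def
  proof (intro allI impI)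
    fix i x y assume x: "x \<in># M' i" and y: "y \<in># M' i"
    show "x = y"
    proof (cases "i = imax")
      case True
      then obtain n c where "M' i = replicate_mset n c" using M' by (simp only: fun_upd_same)
      then show ?thesis using x y by (auto split: if_splits)
    next
      case False
      show ?thesis
      proof (cases "i = imin")
        case True
        with False x y M' have "x \<in># M imin - {#bmin#}" "y \<in># M imin - {#bmin#}"
          by (auto simp: Let_def)
        then have "x \<in># M imin" "y \<in># M imin" by (auto dest: in_diffD)
        then show ?thesis using assms(1) unfolding unif_def by blast
      next
        case False2: False
        with False x y M' have "x \<in># M i" "y \<in># M i" by (auto simp: Let_def)
        then show ?thesis using assms(1) unfolding unif_def by blast
      qed
    qed
  qed
qed

lemma unif_avg:
  assumes "unif M" "b \<in># M i"
  shows "b \<le> sum_mset (M i) / real (size (M i))"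
proof -
  have f: "{#y \<in># M i. y = b#} = M i"
    using assms unfolding unif_def by (auto simp: filter_mset_eq_conv)
  have "M i = replicate_mset (count (M i) b) b"
    using f filter_eq_replicate_mset[of b "M i"] by simp
  then have "M i = replicate_mset (size (M i)) b"
    by (metis size_replicate_mset)
  then have "sum_mset (M i) = real (size (M i)) * b"
    by (metis sum_mset_replicate_mset of_nat_id)
  moreover have "size (M i) > 0" using assms(2) by (metis gr0I insert_DiffM size_add_mset zero_less_Suc)
  ultimately show ?thesis by (metis order_refl of_nat_0_less_iff nonzero_mult_div_cancel_left less_irrefl mult.commute)
qed

theorem lemma12:
  fixes m :: nat and s :: "nat \<Rightarrow> real" and P \<alpha> \<epsilon> :: real and M :: tassign
  assumes "1 \<le> m"
    and "\<forall>i<m. 0 < s i"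
    and "\<forall>i j. i \<le> j \<longrightarrow> j < m \<longrightarrow> s j \<le> s i"
    and "0 \<le> P"
    and "0 < \<alpha>" "\<alpha> < 1" "0 < \<epsilon>" "\<epsilon> < 1"
    and "ipr_final m s P \<alpha> \<epsilon> 2 M"
  shows "\<forall>i<m. \<forall>b. b \<in># M i \<and> 0 < b \<and> b = Max (set_mset (big_bags m M)) \<longrightarrow>
           b \<le> sum_mset (M i) / real (size (M i))"
proof -
  obtain B :: "nat \<Rightarrow> real" and Ms :: "nat \<Rightarrow> tassign" and k where
    h0: "Ms 0 = (\<lambda>i. {#B i#})" and
    hs: "\<forall>j<k. lpt_rebalance m (Ms j) (Ms (Suc j))" and
    hk: "M = Ms k"
    using assms(9) unfolding ipr_final_def Let_def by blast
  have "j \<le> k \<Longrightarrow> unif (Ms j)" for j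
  proof (induction j)
    case 0
    then show ?case using h0 by (simp add: unif_def)
  next
    case (Suc j)
    then show ?case using hs unif_step by (meson Suc_le_lessD less_imp_le_nat)
  qed
  then have "unif M" using hk by simp
  then show ?thesis using unif_avg by blast
qed

end
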